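(* Let $q$ be a prime power. For $n\in\{2,3\}$, the orbitals of $GU(n,q)$ acting on $\Phi(n,q)$ are exactly the $2(q^2-1)$ sets $S_{\alpha^i}$ and $R_{\alpha^i}$, $0\le i\le q^2-2$. For $n\ge 4$, the orbitals are exactly these sets together with $T$. Consequently the rank of the permutation group $(GU(n,q),\Phi(n,q))$ (equivalently, the number of relations of the Schurian association scheme $\mathcal X(GU(n,q),\Phi(n,q))$) is $2q^2-2$ if $n\in\{2,3\}$ and $2q^2-1$ if $n\ge 4$.
   Context: Let $q$ be a prime power, $V=\mathbb{F}_{q^2}^n$ with Hermitian form $\langle x,y\rangle=\sum_{k=1}^n x_k y_k^{\,q}$, $GU(n,q)=\{U\in GL_n(\mathbb{F}_{q^2}):U\bar U^T=I\}$ ($\bar U$ = entrywise $q$-th power) acting on the right on $V$, and on pairs by $(x,y)U=(xU,yU)$. $\Phi=\Phi(n,q)=\{x\in V\setminus\{0\}:\langle x,x\rangle=0\}$. An orbital is an orbit of the group on $\Phi\times\Phi$; the orbitals of a transitive group form the relations of the Schurian association scheme $\mathcal X(G,\Phi)$. Fix a primitive element $\alpha$ of $\mathbb{F}_{q^2}$; for $0\le i\le q^2-2$ let $S_{\alpha^i}=\{(x,y)\in\Phi\times\Phi:y=\alpha^ix\}$, $R_{\alpha^i}=\{(x,y)\in\Phi\times\Phi:\langle x,y\rangle=\alpha^i\}$, and $T=\{(x,y)\in\Phi\times\Phi:\langle x,y\rangle=0,\ y\notin\mathrm{Span}\{x\}\}$. *)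

theory Defs
  imports "HOL-Analysis.Analysis" "HOL-Computational_Algebra.Primes"
begin

text \<open>F_{q^2} is rendered as a finite field type 'a with CARD('a) = q^2; V = 'a^'n with CARD('n) = n.
  Conjugation is the Frobenius c \<mapsto> c^q.\<close>

definition herm :: "nat \<Rightarrow> 'a::{field,finite}^'n \<Rightarrow> 'a^'n \<Rightarrow> 'a" where
  "herm q x y = (\<Sum>k\<in>UNIV. x$k * (y$k)^q)"

definition conjmat :: "nat \<Rightarrow> 'a::{field,finite}^'n^'n \<Rightarrow> 'a^'n^'n" where
  "conjmat q U = (\<chi> i j. (U$i$j)^q)"

definition GU :: "nat \<Rightarrow> ('a::{field,finite}^'n^'n) set" where
  "GU q = {U. U ** transpose (conjmat q U) = mat 1}"

definition Phi :: "nat \<Rightarrow> ('a::{field,finite}^'n) set" where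
  "Phi q = {x. x \<noteq> 0 \<and> herm q x x = 0}"

text \<open>Right action x \<mapsto> xU (row vector times matrix), diagonal action on pairs.
  An orbital is an orbit of GU(n,q) on Phi \<times> Phi.\<close>
definition orbitals :: "nat \<Rightarrow> (('a::{field,finite}^'n) \<times> ('a^'n)) set set" where
  "orbitals q = {{(x v* U, y v* U) | U. U \<in> GU q} | x y. x \<in> Phi q \<and> y \<in> Phi q}"

definition S_rel :: "nat \<Rightarrow> 'a::{field,finite} \<Rightarrow> (('a^'n) \<times> ('a^'n)) set" where
  "S_rel q a = {(x, y). x \<in> Phi q \<and> y \<in> Phi q \<and> y = a *s x}"

definition R_rel :: "nat \<Rightarrow> 'a::{field,finite} \<Rightarrow> (('a^'n) \<times> ('a^'n)) set" where
  "R_rel q a = {(x, y). x \<in> Phi q \<and> y \<in> Phi q \<and> herm q x y = a}"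

definition T_rel :: "nat \<Rightarrow> (('a::{field,finite}^'n) \<times> ('a^'n)) set" where
  "T_rel q = {(x, y). x \<in> Phi q \<and> y \<in> Phi q \<and> herm q x y = 0 \<and> \<not> (\<exists>c. y = c *s x)}"

definition primitive_elt :: "'a::{field,finite} \<Rightarrow> bool" where
  "primitive_elt \<alpha> \<longleftrightarrow> (\<forall>x. x \<noteq> 0 \<longrightarrow> (\<exists>i::nat. x = \<alpha>^i))"

end

theory Submission
  imports Defs "HOL-Number_Theory.Residues" "HOL-Library.Cardinality"
begin


lemma fin_field_pow_card:
  fixes x :: "'a :: {field,finite}"
  shows   "x ^ CARD('a) = x"
proof (cases "x = 0")
  case False
  have "x * (\<Prod>y\<in>UNIV-{0}. x * y) = x * x ^ (card (UNIV :: 'a set) - 1) * \<Prod>(UNIV-{0})"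
    by (simp add: prod.distrib mult_ac)
  also have "x * x ^ (card (UNIV :: 'a set) - 1) = x ^ Suc (card (UNIV :: 'a set) - 1)"
    by (subst power_Suc) auto
  also have "Suc (card (UNIV :: 'a set) - 1) = card (UNIV :: 'a set)"
    using finite_UNIV_card_ge_0[where ?'a = 'a] by simp
  also have "(\<Prod>y\<in>UNIV-{0}. x * y) = (\<Prod>y\<in>UNIV-{0}. y)"
    by (rule prod.reindex_bij_witness[of _ "\<lambda>y. y / x" "\<lambda>y. x * y"]) (use False in auto)
  finally show ?thesis
    by simp
qed (use finite_UNIV_card_ge_0[where ?'a = 'a] in auto)

lemma frob_setup:
  assumes "\<exists>p k. prime p \<and> k > 0 \<and> q = p ^ k" and "CARD('a::{field,finite}) = q ^ 2"
  shows "q \<ge> 2" "\<And>a b::'a. (a+b)^q = a^q + b^q"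
proof -
  obtain p k where pk: "prime p" "k > 0" "q = p^k" using assms(1) by blast
  have "p \<ge> 2" using pk(1) prime_ge_2_nat by blast
  moreover have "p^1 \<le> p^k" using pk(2) \<open>p \<ge> 2\<close> by (intro power_increasing) auto
  ultimately show "q \<ge> 2" using pk(3) by simp
  have fin: "finite (UNIV::'a set)" by simp
  have cp: "CHAR('a) > 0" using finite_imp_CHAR_pos[OF fin] by simp
  have pc: "prime CHAR('a)" using prime_CHAR_semidom[OF cp] .
  have "CHAR('a) dvd p ^ (k*2)" using CHAR_dvd_CARD[where 'a='a] assms(2) pk(3)
    by (simp add: power_mult)
  hence "CHAR('a) dvd p" using pc prime_dvd_power by blast
  hence cpp: "CHAR('a) = p" using pc pk(1) by (simp add: primes_dvd_imp_eq)
  fix a b :: 'a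
  show "(a+b)^q = a^q + b^q"
    by (rule freshmans_dream') (use pc cpp pk in auto)
qed

locale GUc =
  fixes q :: nat and \<alpha> :: "'a::{field,finite}"
  assumes q2: "q \<ge> 2"
    and cardA: "CARD('a) = q^2"
    and frob: "\<And>a b::'a. (a+b)^q = a^q + b^q"
    and prim: "primitive_elt \<alpha>"
begin

definition cj :: "'a \<Rightarrow> 'a" where "cj a = a^q"

lemma cj_add[simp]: "cj (a + b) = cj a + cj b" by (simp add: cj_def frob)
lemma cj_mult[simp]: "cj (a * b) = cj a * cj b" by (simp add: cj_def power_mult_distrib)
lemma cj_0[simp]: "cj 0 = 0" using q2 by (simp add: cj_def)
lemma cj_1[simp]: "cj 1 = 1" by (simp add: cj_def)
lemma cj_neg[simp]: "cj (- a) = - cj a"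
proof -
  have "cj (a + - a) = 0" by simp
  hence "cj a + cj (-a) = 0" by (simp only: cj_add)
  thus ?thesis by (simp add: add_eq_0_iff)
qed
lemma cj_diff[simp]: "cj (a - b) = cj a - cj b"
  using cj_add[of a "-b"] by simp
lemma cj_inv[simp]: "cj (inverse a) = inverse (cj a)" by (simp add: cj_def power_inverse)
lemma cj_div[simp]: "cj (a / b) = cj a / cj b" by (simp add: cj_def power_divide)
lemma cj_cj[simp]: "cj (cj a) = a"
  using fin_field_pow_card[of a] cardA by (simp add: cj_def power2_eq_square power_mult)
lemma cj_eq0[simp]: "cj a = 0 \<longleftrightarrow> a = 0" using q2 by (simp add: cj_def)
lemma cj_sum: "cj (sum f A) = sum (\<lambda>i. cj (f i)) A"
  by (induct A rule: infinite_finite_induct) auto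
lemma cj_pow: "cj (a ^ m) = (cj a) ^ m" by (induct m) auto
lemma cj_inj: "cj a = cj b \<longleftrightarrow> a = b" by (metis cj_cj)

lemma Nfacts: "(q^2 - 1) = (q - 1) * (q + 1)" "q^2 - 1 > 0" "q - 1 > 0"
proof -
  obtain m where m: "q = Suc (Suc m)" using q2 by (metis add_2_eq_Suc le_Suc_ex)
  show "(q^2 - 1) = (q - 1) * (q + 1)" "q^2 - 1 > 0" "q - 1 > 0"
    unfolding m power2_eq_square by simp_all
qed

lemma cardnz: "card (UNIV - {0::'a}) = q^2 - 1"
  using cardA by (simp add: card_Diff_singleton)

lemma alpha_nz: "\<alpha> \<noteq> 0"
proof
  assume a0: "\<alpha> = 0"
  have "UNIV - {0::'a} \<subseteq> {1}"
  proof
    fix x :: 'a assume "x \<in> UNIV - {0}"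
    then obtain i where "x = \<alpha>^i" using prim unfolding primitive_elt_def by auto
    with a0 \<open>x \<in> UNIV - {0}\<close> show "x \<in> {1}" by (cases i) auto
  qed
  hence "card (UNIV - {0::'a}) \<le> card {1::'a}" by (intro card_mono) auto
  moreover have "q^2 \<ge> 2^2" using q2 by (intro power_mono) auto
  ultimately show False using cardnz by simp
qed

lemma alpha_N: "\<alpha> ^ (q^2 - 1) = 1"
proof -
  have e: "Suc (q^2 - 1) = q^2" using Nfacts(2) by simp
  have "\<alpha> ^ (q^2 - 1) * \<alpha> = \<alpha> ^ Suc (q^2 - 1)" by (simp only: power_Suc2)
  also have "\<dots> = \<alpha> ^ q^2" by (simp only: e)
  finally have "\<alpha> ^ (q^2 - 1) * \<alpha> = \<alpha> ^ q^2" .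
  also have "\<dots> = \<alpha>" using fin_field_pow_card[of \<alpha>] cardA by simp
  finally show ?thesis using alpha_nz by simp
qed

lemma pow_mod: "\<alpha>^m = \<alpha>^(m mod (q^2-1))"
proof -
  have "\<alpha>^m = \<alpha>^((q^2-1) * (m div (q^2-1)) + m mod (q^2-1))" by (simp only: mult_div_mod_eq)
  also have "\<dots> = (\<alpha>^(q^2-1))^(m div (q^2-1)) * \<alpha>^(m mod (q^2-1))" by (simp only: power_add power_mult)
  also have "\<dots> = \<alpha>^(m mod (q^2-1))" using alpha_N by simp
  finally show ?thesis .
qed

lemma alpha_small: assumes "0 < j" "j < q^2 - 1" shows "\<alpha>^j \<noteq> 1"
proof
  assume aj: "\<alpha>^j = 1"
  have "UNIV - {0::'a} \<subseteq> (\<lambda>i. \<alpha>^i) ` {..<j}"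
  proof
    fix x :: 'a assume "x \<in> UNIV - {0}"
    then obtain i where "x = \<alpha>^i" using prim unfolding primitive_elt_def by auto
    also have "\<alpha>^i = \<alpha>^(j * (i div j) + i mod j)" by (simp only: mult_div_mod_eq)
    also have "\<dots> = (\<alpha>^j)^(i div j) * \<alpha>^(i mod j)" by (simp only: power_add power_mult)
    also have "\<dots> = \<alpha>^(i mod j)" using aj by simp
    finally show "x \<in> (\<lambda>i. \<alpha>^i) ` {..<j}" using assms by auto
  qed
  hence "card (UNIV - {0::'a}) \<le> card ((\<lambda>i. \<alpha>^i) ` {..<j})" by (intro card_mono) auto
  also have "\<dots> \<le> j" using card_image_le[of "{..<j}"] by simp
  finally show False using cardnz assms by simp
qed

lemma alpha_pow1: "\<alpha>^m = 1 \<longleftrightarrow> (q^2 - 1) dvd m"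
proof -
  have e: "\<alpha>^m = \<alpha>^(m mod (q^2-1))" by (rule pow_mod)
  show ?thesis
  proof
    assume "\<alpha>^m = 1"
    hence "\<alpha>^(m mod (q^2-1)) = 1" using e by simp
    hence "m mod (q^2-1) = 0" using alpha_small[of "m mod (q^2-1)"] Nfacts by fastforce
    thus "(q^2 - 1) dvd m" by auto
  next
    assume "(q^2 - 1) dvd m"
    then obtain k where "m = (q^2-1)*k" by (elim dvdE)
    hence "\<alpha>^m = (\<alpha>^(q^2-1))^k" by (simp only: power_mult)
    thus "\<alpha>^m = 1" by (simp only: alpha_N power_one)
  qed
qed

lemma alpha_inj: "inj_on (\<lambda>i. \<alpha>^i) {..<q^2-1}"
proof (rule inj_onI)
  fix i j assume ij: "i \<in> {..<q^2-1}" "j \<in> {..<q^2-1}" "\<alpha>^i = \<alpha>^j"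
  show "i = j"
  proof (rule ccontr)
    assume "i \<noteq> j"
    then consider "i < j" | "j < i" by linarith
    thus False
    proof cases
      case 1
      have "\<alpha>^j = \<alpha>^i * \<alpha>^(j-i)" using 1 by (simp add: power_add[symmetric])
      hence "\<alpha>^(j-i) = 1" using ij(3) alpha_nz by simp
      moreover have "j - i < q^2 - 1" using ij 1 by simp
      moreover have "0 < j - i" using 1 by simp
      ultimately show False using alpha_small[of "j-i"] by blast
    next
      case 2
      have "\<alpha>^i = \<alpha>^j * \<alpha>^(i-j)" using 2 by (simp add: power_add[symmetric])
      hence "\<alpha>^(i-j) = 1" using ij(3) alpha_nz by simp
      moreover have "i - j < q^2 - 1" using ij 2 by simp
      moreover have "0 < i - j" using 2 by simp
      ultimately show False using alpha_small[of "i-j"] by blast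
    qed
  qed
qed

lemma alpha_image: "(\<lambda>i. \<alpha>^i) ` {..<q^2-1} = UNIV - {0}"
proof
  show "(\<lambda>i. \<alpha>^i) ` {..<q^2-1} \<subseteq> UNIV - {0}" using alpha_nz by auto
  show "UNIV - {0} \<subseteq> (\<lambda>i. \<alpha>^i) ` {..<q^2-1}"
  proof
    fix x :: 'a assume "x \<in> UNIV - {0}"
    then obtain i where "x = \<alpha>^i" using prim unfolding primitive_elt_def by auto
    also have "\<alpha>^i = \<alpha>^(i mod (q^2-1))" by (rule pow_mod)
    finally show "x \<in> (\<lambda>i. \<alpha>^i) ` {..<q^2-1}" using Nfacts by auto
  qed
qed

end

context GUc begin

lemma cj_alpha: "cj \<alpha> \<noteq> \<alpha>"
proof
  assume ca: "cj \<alpha> = \<alpha>"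
  obtain m where m: "q = Suc m" using q2 by (cases q) auto
  have "\<alpha>^(q-1) * \<alpha> = \<alpha>^q" using m by (simp only: power_Suc2 diff_Suc_1)
  also have "\<dots> = 1 * \<alpha>" using ca by (simp add: cj_def)
  finally have a1: "\<alpha>^(q-1) = 1" using alpha_nz by simp
  have "q*q \<ge> 2*q" using q2 by simp
  hence "q < q*q" using q2 by linarith
  hence "q - 1 < q*q - 1" using q2 by arith
  hence "q - 1 < q^2 - 1" by (simp add: power2_eq_square)
  thus False using alpha_small[of "q-1"] a1 Nfacts(3) by blast
qed

lemma norm_surj: assumes "r \<noteq> 0" "cj r = r" shows "\<exists>c. c * cj c = r"
proof -
  obtain j where rj: "r = \<alpha>^j" using prim assms(1) unfolding primitive_elt_def by auto
  obtain m0 where m0: "q = Suc m0" using q2 by (cases q) auto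
  have "\<alpha>^j * \<alpha>^(j*(q-1)) = \<alpha>^(j*q)" using m0 by (simp add: power_add[symmetric])
  also have "\<dots> = \<alpha>^j" using assms(2) rj by (simp add: cj_def power_mult)
  finally have "\<alpha>^j * \<alpha>^(j*(q-1)) = \<alpha>^j * 1" by simp
  hence "\<alpha>^(j*(q-1)) = 1" using alpha_nz by simp
  hence d: "(q^2 - 1) dvd j*(q-1)" using alpha_pow1 by blast
  have "(q-1)*(q+1) dvd (q-1) * j" using d unfolding Nfacts(1) by (simp only: mult.commute)
  hence "(q+1) dvd j" using nat_mult_dvd_cancel1[OF Nfacts(3), of "q+1" j] by blast
  then obtain k where k: "j = (q+1)*k" by (elim dvdE)
  have "\<alpha>^k * cj (\<alpha>^k) = (\<alpha>^k)^(Suc q)" by (simp add: cj_def)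
  also have "\<dots> = r" using rj k by (simp add: power_mult[symmetric] power_add mult.commute)
  finally show ?thesis by blast
qed

lemma trace_surj: assumes "cj r = r" shows "\<exists>t. t + cj t = r"
proof -
  obtain t1 where t1: "t1 + cj t1 \<noteq> 0"
  proof (cases "(1::'a) + 1 = 0")
    case True
    have "\<alpha> + cj \<alpha> \<noteq> 0"
    proof
      assume "\<alpha> + cj \<alpha> = 0"
      hence "cj \<alpha> = - \<alpha>" by (simp add: eq_neg_iff_add_eq_0 add.commute)
      also have "- \<alpha> = \<alpha>"
      proof -
        have "\<alpha> + \<alpha> = (1 + 1) * \<alpha>" by (simp add: distrib_right)
        also have "\<dots> = 0" using True by simp
        finally show ?thesis by (simp add: add_eq_0_iff[symmetric])
      qed
      finally show False using cj_alpha by simp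
    qed
    thus ?thesis using that by blast
  next
    case False
    thus ?thesis using that[of 1] by simp
  qed
  define s where "s = t1 + cj t1"
  have s: "cj s = s" unfolding s_def by (simp add: add.commute)
  have "(r / s) * t1 + cj ((r / s) * t1) = (r / s) * (t1 + cj t1)"
    using s assms by (simp add: distrib_left)
  also have "\<dots> = r" using t1 unfolding s_def by simp
  finally show ?thesis by blast
qed

end

context GUc begin

abbreviation H :: "'a^'n \<Rightarrow> 'a^'n \<Rightarrow> 'a" where "H \<equiv> herm q"

lemma herm_cj: "herm q x y = (\<Sum>k\<in>UNIV. x$k * cj (y$k))" by (simp add: herm_def cj_def)

lemma herm_add_l: "H (x+y) z = H x z + H y z"
  by (simp add: herm_cj distrib_right sum.distrib)
lemma herm_add_r: "H x (y+z) = H x y + H x z"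
  by (simp add: herm_cj distrib_left sum.distrib)
lemma herm_scale_l: "H (c *s x) y = c * H x y"
  by (simp add: herm_cj sum_distrib_left mult.assoc)
lemma herm_scale_r: "H x (c *s y) = cj c * H x y"
  by (simp add: herm_cj sum_distrib_left mult_ac)
lemma herm_neg_l: "H (- x) y = - H x y"
  by (simp add: herm_cj sum_negf)
lemma herm_neg_r: "H x (- y) = - H x y"
  by (simp add: herm_cj sum_negf)
lemma herm_diff_l: "H (x - y) z = H x z - H y z"
  by (simp add: herm_cj left_diff_distrib sum_subtractf)
lemma herm_diff_r: "H x (y - z) = H x y - H x z"
  by (simp add: herm_cj right_diff_distrib sum_subtractf)
lemma herm_0_l[simp]: "H 0 y = 0" by (simp add: herm_cj)
lemma herm_0_r[simp]: "H x 0 = 0" by (simp add: herm_cj)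
lemma herm_sym: "H y x = cj (H x y)"
  by (simp add: herm_cj cj_sum mult.commute)
lemma herm_sum_l: "H (sum f A) y = (\<Sum>i\<in>A. H (f i) y)"
  by (simp add: herm_cj sum_component sum_distrib_right) (rule sum.swap)
lemma herm_sum_r: "H x (sum f A) = (\<Sum>i\<in>A. H x (f i))"
proof -
  have "H x (sum f A) = cj (H (sum f A) x)" by (rule herm_sym)
  also have "\<dots> = (\<Sum>i\<in>A. cj (H (f i) x))" by (simp add: herm_sum_l cj_sum)
  also have "\<dots> = (\<Sum>i\<in>A. H x (f i))" by (simp add: herm_sym[of x])
  finally show ?thesis .
qed
lemmas herm_simps = herm_add_l herm_add_r herm_scale_l herm_scale_r herm_neg_l herm_neg_r
  herm_diff_l herm_diff_r

lemma herm_axis_r: "H x (axis k 1) = x$k"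
proof -
  have "\<And>j. x$j * cj ((axis k 1)$j) = (if j = k then x$k else 0)" by (auto simp: axis_def)
  thus ?thesis by (simp add: herm_cj)
qed
lemma herm_axis_l: "H (axis k 1) y = cj (y$k)"
proof -
  have "\<And>j. (axis k 1)$j * cj (y$j) = (if j = k then cj (y$k) else 0)" by (auto simp: axis_def)
  thus ?thesis by (simp add: herm_cj)
qed

lemma nondeg_l: assumes "\<And>y. H x y = 0" shows "x = 0"
  using assms[of "axis _ 1"] by (simp add: herm_axis_r vec_eq_iff)
lemma nondeg_r: assumes "\<And>y. H y x = 0" shows "x = 0"
  using assms[of "axis _ 1"] by (simp add: herm_axis_l vec_eq_iff)

lemma GU_iff: "(U::'a^'n^'n) \<in> GU q \<longleftrightarrow> (\<forall>i j. H (U$i) (U$j) = (if i = j then 1 else 0))"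
  by (simp add: GU_def vec_eq_iff matrix_matrix_mult_def transpose_def conjmat_def mat_def herm_def)

lemma vm_sum: "(x::'a^'n) v* U = (\<Sum>i\<in>UNIV. x$i *s U$i)"
  by (simp add: vec_eq_iff vector_matrix_mult_def sum_component mult.commute)
lemma vm_add: "((x::'a^'n) + y) v* U = x v* U + y v* U"
  by (simp add: vec_eq_iff vector_matrix_mult_def distrib_right sum.distrib)
lemma vm_scale: "(c *s (x::'a^'n)) v* U = c *s (x v* U)"
  by (simp add: vec_eq_iff vector_matrix_mult_def sum_distrib_left mult_ac)
lemma vm_diff: "((x::'a^'n) - y) v* U = x v* U - y v* U"
  by (simp add: vec_eq_iff vector_matrix_mult_def left_diff_distrib sum_subtractf)
lemma vm_axis: "axis i 1 v* U = (U::'a^'n^'n)$i"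
proof -
  have "\<And>j k. (axis i 1)$k * U$k$j = (if k = i then U$i$j else 0)" by (auto simp: axis_def)
  thus ?thesis by (simp add: vec_eq_iff vector_matrix_mult_def)
qed

lemma delta1: "(\<Sum>j\<in>UNIV. (f::'n::finite \<Rightarrow> 'a) j * (if i = j then (1::'a) else 0)) = f i"
proof -
  have "(\<Sum>j\<in>UNIV. f j * (if i = j then (1::'a) else 0)) = (\<Sum>j\<in>UNIV. if i = j then f j else 0)"
    by (rule sum.cong) auto
  thus ?thesis by simp
qed
lemma delta2: "(\<Sum>j\<in>UNIV. (f::'n::finite \<Rightarrow> 'a) j * (if j = i then (1::'a) else 0)) = f i"
proof -
  have "(\<Sum>j\<in>UNIV. f j * (if j = i then (1::'a) else 0)) = (\<Sum>j\<in>UNIV. if j = i then f j else 0)"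
    by (rule sum.cong) auto
  thus ?thesis by simp
qed

lemma herm_vm: assumes "(U::'a^'n^'n) \<in> GU q" shows "H (x v* U) (y v* U) = H x y"
proof -
  have o: "\<And>i j. H (U$i) (U$j) = (if i = j then 1 else 0)" using assms GU_iff by blast
  have "H (x v* U) (y v* U) = (\<Sum>i\<in>UNIV. x$i * cj (y$i))"
    by (simp only: vm_sum herm_sum_l herm_scale_l herm_sum_r herm_scale_r o)
       (simp add: delta1 delta2 mult.commute)
  thus ?thesis by (simp add: herm_cj)
qed

lemma GU_inv: assumes "(U::'a^'n^'n) \<in> GU q" shows "\<exists>W\<in>GU q. U ** W = mat 1 \<and> W ** U = mat 1"
proof -
  define W where "W = transpose (conjmat q U)"
  have 1: "U ** W = mat 1" using assms by (simp add: GU_def W_def)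
  hence 2: "W ** U = mat 1" using matrix_left_right_inverse by blast
  have "transpose (conjmat q W) = U"
    using cj_cj by (simp add: W_def vec_eq_iff transpose_def conjmat_def cj_def)
  hence "W \<in> GU q" using 2 by (simp add: GU_def)
  thus ?thesis using 1 2 by blast
qed

lemma row_mult: "(A ** B)$i = A$i v* B"
  by (simp add: vec_eq_iff matrix_matrix_mult_def vector_matrix_mult_def mult.commute)

lemma GU_mult: assumes "(A::'a^'n^'n) \<in> GU q" "B \<in> GU q" shows "A ** B \<in> GU q"
proof -
  have "\<forall>i j. H ((A**B)$i) ((A**B)$j) = (if i=j then 1 else 0)"
    using assms(1) by (simp add: row_mult herm_vm[OF assms(2)] GU_iff)
  thus ?thesis by (simp add: GU_iff)
qed

end

context GUc begin

definition ON :: "'n set \<Rightarrow> ('n \<Rightarrow> 'a^'n) \<Rightarrow> bool" where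
  "ON I u \<longleftrightarrow> (\<forall>i\<in>I. \<forall>j\<in>I. H (u i) (u j) = (if i = j then 1 else 0))"

lemma delta_on: assumes "k \<in> (I::'n::finite set)"
  shows "(\<Sum>i\<in>I. c i * (if i = k then (1::'a) else 0)) = c k"
proof -
  have "(\<Sum>i\<in>I. c i * (if i = k then (1::'a) else 0)) = (\<Sum>i\<in>I. if i = k then c i else 0)"
    by (rule sum.cong) auto
  thus ?thesis using assms by simp
qed

lemma perp_exists:
  fixes u :: "'n \<Rightarrow> 'a^'n"
  assumes on: "ON I u" and j: "j \<notin> I"
  shows "\<exists>v. H v v = 1 \<and> (\<forall>i\<in>I. H v (u i) = 0)"
proof -
  define P where "P x = x - (\<Sum>i\<in>I. H x (u i) *s u i)" for x
  have PW: "H (P x) (u k) = 0" if "k \<in> I" for x k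
  proof -
    have "H (P x) (u k) = H x (u k) - (\<Sum>i\<in>I. H x (u i) * H (u i) (u k))"
      by (simp add: P_def herm_diff_l herm_sum_l herm_scale_l)
    also have "(\<Sum>i\<in>I. H x (u i) * H (u i) (u k)) = (\<Sum>i\<in>I. H x (u i) * (if i = k then 1 else 0))"
      using on that unfolding ON_def by (intro sum.cong) auto
    also have "\<dots> = H x (u k)" by (rule delta_on[OF that])
    finally show ?thesis by simp
  qed
  define W where "W = {v. \<forall>i\<in>I. H v (u i) = 0}"
  have PinW: "P x \<in> W" for x using PW unfolding W_def by auto
  have Wadd: "a + c *s b \<in> W" if "a \<in> W" "b \<in> W" for a b c
    using that unfolding W_def by (simp add: herm_add_l herm_scale_l)
  have decomp: "x = P x + (\<Sum>i\<in>I. H x (u i) *s u i)" for x by (simp add: P_def)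
  obtain x0 where x0: "P x0 \<noteq> 0"
  proof (rule ccontr)
    assume "\<not> thesis"
    hence P0: "P x = 0" for x using that by blast
    define g where "g x = (\<chi> i. if i \<in> I then H x (u i) else 0)" for x :: "'a^'n"
    have "inj g"
    proof (rule injI)
      fix x y assume "g x = g y"
      hence "\<forall>i\<in>I. H x (u i) = H y (u i)" unfolding g_def by (simp add: vec_eq_iff) metis
      hence "(\<Sum>i\<in>I. H x (u i) *s u i) = (\<Sum>i\<in>I. H y (u i) *s u i)" by simp
      thus "x = y" using decomp[of x] decomp[of y] P0 by simp
    qed
    hence "surj g" by (intro finite_UNIV_inj_surj) simp_all
    then obtain x where "axis j 1 = g x" by blast
    hence "(axis j 1 :: 'a^'n)$j = g x $ j" by simp
    thus False using j unfolding g_def by (simp add: axis_def)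
  qed
  define w where "w = P x0"
  have wW: "w \<in> W" using PinW w_def by simp
  obtain v0 where v0: "v0 \<in> W" "H v0 v0 \<noteq> 0"
  proof (rule ccontr)
    note ob = that
    assume nt: "\<not> thesis"
    have iso: "H v v = 0" if "v \<in> W" for v using that ob nt by blast
    have wv: "H w v = 0" if vW: "v \<in> W" for v
    proof -
      have a: "w + 1 *s v \<in> W" using Wadd wW vW by blast
      have b: "w + \<alpha> *s v \<in> W" using Wadd wW vW by blast
      have e1: "H w v + H v w = 0"
        using iso[OF a] iso[OF wW] iso[OF vW] by (simp add: herm_add_l herm_add_r algebra_simps)
      have e2: "cj \<alpha> * H w v + \<alpha> * H v w = 0"
        using iso[OF b] iso[OF wW] iso[OF vW]
        by (simp add: herm_add_l herm_add_r herm_scale_l herm_scale_r algebra_simps)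
      have "H v w = - H w v" using e1 by (simp add: eq_neg_iff_add_eq_0 add.commute)
      with e2 have "(cj \<alpha> - \<alpha>) * H w v = 0" by (simp add: algebra_simps)
      thus ?thesis using cj_alpha by simp
    qed
    have "H w z = 0" for z
    proof -
      have "H w z = H w (P z) + (\<Sum>i\<in>I. H w (H z (u i) *s u i))"
        by (subst decomp[of z]) (simp add: herm_add_r herm_sum_r)
      also have "(\<Sum>i\<in>I. H w (H z (u i) *s u i)) = 0"
        using wW unfolding W_def by (simp add: herm_scale_r)
      finally show ?thesis using wv[OF PinW] by simp
    qed
    hence "w = 0" by (rule nondeg_l)
    thus False using x0 w_def by simp
  qed
  define r where "r = H v0 v0"
  have cr: "cj r = r" unfolding r_def using herm_sym[of v0 v0] by simp
  obtain c where c: "c * cj c = inverse r"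
    using norm_surj[of "inverse r"] v0(2) cr unfolding r_def by auto
  have "H (c *s v0) (c *s v0) = (c * cj c) * r" by (simp add: herm_scale_l herm_scale_r r_def mult_ac)
  also have "\<dots> = 1" using c v0(2) r_def by simp
  finally have "H (c *s v0) (c *s v0) = 1" .
  moreover have "\<forall>i\<in>I. H (c *s v0) (u i) = 0" using v0(1) unfolding W_def by (simp add: herm_scale_l)
  ultimately show ?thesis by blast
qed

lemma ext_aux:
  fixes u :: "'n \<Rightarrow> 'a^'n"
  shows "card (UNIV - I) = m \<Longrightarrow> ON I u \<Longrightarrow> \<exists>U\<in>GU q. \<forall>i\<in>I. U$i = u i"
proof (induction m arbitrary: I u)
  case 0
  hence "I = UNIV" by auto
  define U where "U = (\<chi> i. u i)"
  have "U \<in> GU q" using 0 \<open>I = UNIV\<close> unfolding GU_iff ON_def U_def by simp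
  thus ?case by (intro bexI[of _ U]) (auto simp: U_def)
next
  case (Suc m)
  have "UNIV - I \<noteq> {}"
  proof
    assume "UNIV - I = {}"
    with Suc.prems(1) show False by simp
  qed
  then obtain j where j: "j \<notin> I" by blast
  obtain v where v: "H v v = 1" "\<forall>i\<in>I. H v (u i) = 0" using perp_exists[OF Suc.prems(2) j] by blast
  define u' where "u' = u(j := v)"
  have on': "ON (insert j I) u'"
    unfolding ON_def
  proof (intro ballI)
    fix a b assume ab: "a \<in> insert j I" "b \<in> insert j I"
    show "H (u' a) (u' b) = (if a = b then 1 else 0)"
    proof (cases "a = j")
      case True
      show ?thesis
      proof (cases "b = j")
        case True thus ?thesis using \<open>a = j\<close> v by (simp add: u'_def)
      next
        case False thus ?thesis using \<open>a = j\<close> v ab by (simp add: u'_def)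
      qed
    next
      case False
      show ?thesis
      proof (cases "b = j")
        case True
        have "H (u a) v = cj (H v (u a))" by (rule herm_sym)
        thus ?thesis using False True v ab by (simp add: u'_def)
      next
        case bF: False thus ?thesis using False Suc.prems(2) ab by (simp add: u'_def ON_def)
      qed
    qed
  qed
  have "card (UNIV - insert j I) = m"
  proof -
    have "UNIV - insert j I = (UNIV - I) - {j}" by auto
    thus ?thesis using Suc.prems(1) j by (simp add: card_Diff_singleton)
  qed
  from Suc.IH[OF this on'] obtain U where "U \<in> GU q" "\<forall>i\<in>insert j I. U$i = u' i" by blast
  moreover have "\<forall>i\<in>I. u' i = u i" using j by (auto simp: u'_def)
  ultimately show ?case by auto
qed

lemma ext: fixes u :: "'n \<Rightarrow> 'a^'n" assumes "ON I u" shows "\<exists>U\<in>GU q. \<forall>i\<in>I. U$i = u i"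
  using ext_aux[OF refl assms] .

lemma move:
  fixes u u' :: "'n \<Rightarrow> 'a^'n"
  assumes "ON I u" "ON I u'"
  shows "\<exists>V\<in>GU q. \<forall>i\<in>I. u i v* V = u' i"
proof -
  obtain U where U: "U \<in> GU q" "\<forall>i\<in>I. U$i = u i" using ext[OF assms(1)] by blast
  obtain U' where U': "U' \<in> GU q" "\<forall>i\<in>I. U'$i = u' i" using ext[OF assms(2)] by blast
  obtain W where W: "W \<in> GU q" "U ** W = mat 1" using GU_inv[OF U(1)] by blast
  have "\<forall>i\<in>I. u i v* (W ** U') = u' i"
  proof
    fix i assume i: "i \<in> I"
    have "u i v* (W ** U') = ((axis i 1 v* U) v* W) v* U'" using U(2) i by (simp add: vm_axis vector_matrix_mul_assoc)
    also have "\<dots> = axis i 1 v* U'" by (simp add: vector_matrix_mul_assoc W(2))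
    also have "\<dots> = u' i" using U'(2) i by (simp add: vm_axis)
    finally show "u i v* (W ** U') = u' i" .
  qed
  thus ?thesis using GU_mult[OF W(1) U'(1)] by blast
qed

end

context GUc begin

definition t0 :: 'a where "t0 = (SOME t. t + cj t = 1)"
definition l0 :: 'a where "l0 = (SOME l. l * cj l = -1)"

lemma t0: "t0 + cj t0 = 1"
  unfolding t0_def by (rule someI_ex) (rule trace_surj, simp)
lemma ct0: "cj t0 = 1 - t0" using t0 by (simp add: algebra_simps eq_diff_eq add.commute)
lemma l0: "l0 * cj l0 = -1"
  unfolding l0_def by (rule someI_ex) (rule norm_surj, simp_all)
lemma l0nz: "l0 \<noteq> 0" using l0 by auto
lemma cl0: "cj l0 = - inverse l0"
  using l0 l0nz by (simp add: field_simps)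

definition HP :: "'a^'n \<Rightarrow> 'a^'n \<Rightarrow> bool" where
  "HP x z \<longleftrightarrow> H x x = 0 \<and> H z z = 0 \<and> H x z = 1"

definition h1 :: "'a^'n \<Rightarrow> 'a^'n \<Rightarrow> 'a^'n" where "h1 x z = x + t0 *s z"
definition h2 :: "'a^'n \<Rightarrow> 'a^'n \<Rightarrow> 'a^'n" where "h2 x z = l0 *s (x - cj t0 *s z)"

lemma hp_on:
  assumes "HP x z"
  shows "H (h1 x z) (h1 x z) = 1" "H (h2 x z) (h2 x z) = 1" "H (h1 x z) (h2 x z) = 0"
    "H (h2 x z) (h1 x z) = 0"
    "x = (1 - t0) *s h1 x z + (t0 / l0) *s h2 x z" "z = h1 x z - (1 / l0) *s h2 x z"
proof -
  have a: "H x x = 0" "H z z = 0" "H x z = 1" using assms unfolding HP_def by auto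
  have b: "H z x = 1" using herm_sym[of z x] a by simp
  show "H (h1 x z) (h1 x z) = 1"
    using a b t0 by (simp add: h1_def herm_simps add.commute)
  show "H (h2 x z) (h2 x z) = 1"
    using a b l0nz by (simp add: h2_def herm_simps ct0 cl0 field_simps)
  show c: "H (h1 x z) (h2 x z) = 0"
    using a b l0nz by (simp add: h1_def h2_def herm_simps ct0 cl0 field_simps)
  show "H (h2 x z) (h1 x z) = 0" using herm_sym[of "h2 x z" "h1 x z"] c by simp
  show "x = (1 - t0) *s h1 x z + (t0 / l0) *s h2 x z"
    using l0nz by (simp add: vec_eq_iff h1_def h2_def ct0 field_simps)
  show "z = h1 x z - (1 / l0) *s h2 x z"
    using l0nz by (simp add: vec_eq_iff h1_def h2_def ct0 field_simps)
qed

lemma h_orth_r: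
  assumes "H w x = 0" "H w z = 0"
  shows "H w (h1 x z) = 0" "H w (h2 x z) = 0"
  using assms by (simp_all add: h1_def h2_def herm_simps)

lemma h_orth_l:
  assumes "H x w = 0" "H z w = 0"
  shows "H (h1 x z) w = 0" "H (h2 x z) w = 0"
  using assms by (simp_all add: h1_def h2_def herm_simps)

lemma partner:
  assumes "H x x = 0" "H x w = 1"
  shows "\<exists>s. HP x (w + s *s x)"
proof -
  define r where "r = H w w"
  have cr: "cj (- r) = - r" unfolding r_def using herm_sym[of w w] by simp
  obtain s where s: "s + cj s = - r" using trace_surj[OF cr] by blast
  have hwx: "H w x = 1" using herm_sym[of w x] assms by simp
  have "H (w + s *s x) (w + s *s x) = r + (s + cj s)"
    using assms hwx unfolding r_def by (simp add: herm_simps algebra_simps)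
  also have "\<dots> = 0" using s by simp
  finally have "H (w + s *s x) (w + s *s x) = 0" .
  moreover have "H x (w + s *s x) = 1" using assms by (simp add: herm_simps)
  ultimately show ?thesis using assms unfolding HP_def by blast
qed

lemma axis_herm: "H (axis i 1) (axis j 1 :: 'a^'n) = (if i = j then 1 else 0)"
proof -
  have "H (axis i 1) (axis j 1) = cj ((axis j 1 :: 'a^'n)$i)" by (rule herm_axis_l)
  thus ?thesis by (simp add: axis_def)
qed

lemma nz_coord: "x \<noteq> 0 \<Longrightarrow> \<exists>k. x$k \<noteq> 0" by (simp add: vec_eq_iff)

lemma unit_partner: assumes "x \<noteq> 0" shows "\<exists>w. H x w = 1"
proof -
  obtain k where k: "x$k \<noteq> 0" using nz_coord[OF assms] by blast
  have "H x (cj (inverse (x$k)) *s axis k 1) = 1" using k by (simp add: herm_scale_r herm_axis_r)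
  thus ?thesis by blast
qed

lemma unit_partner_l: assumes "x \<noteq> 0" shows "\<exists>w. H w x = 1"
proof -
  obtain w where "H x w = 1" using unit_partner[OF assms] by blast
  hence "H w x = 1" using herm_sym[of w x] by simp
  thus ?thesis by blast
qed

lemma partner_phi: assumes "x \<in> Phi q" shows "\<exists>z. HP x z"
proof -
  have x: "x \<noteq> 0" "H x x = 0" using assms unfolding Phi_def by auto
  obtain w where "H x w = 1" using unit_partner[OF x(1)] by blast
  thus ?thesis using partner[OF x(2)] by blast
qed

lemma HP_nz: "HP x z \<Longrightarrow> x \<noteq> 0 \<and> z \<noteq> 0" unfolding HP_def by auto

lemma comb1: "x = (1 - t0) *s a + (t0/l0) *s b \<Longrightarrow> x' = (1 - t0) *s a' + (t0/l0) *s b' \<Longrightarrow>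
   a v* V = a' \<Longrightarrow> b v* V = b' \<Longrightarrow> x v* V = (x'::'a^'n)"
  by (simp add: vm_add vm_scale vm_diff)
lemma comb2: "x = a - (1/l0) *s b \<Longrightarrow> x' = a' - (1/l0) *s b' \<Longrightarrow>
   a v* V = a' \<Longrightarrow> b v* V = b' \<Longrightarrow> x v* V = (x'::'a^'n)"
  by (simp add: vm_diff vm_scale)

lemma hp_move:
  fixes i1 i2 :: "'n::finite" and x z x' z' :: "'a^'n"
  assumes "i1 \<noteq> i2" "HP x z" "HP x' z'"
  shows "\<exists>V\<in>GU q. x v* V = x' \<and> z v* V = z'"
proof -
  define u where "u = (\<lambda>i. if i = i1 then h1 x z else h2 x z)"
  define u' where "u' = (\<lambda>i. if i = i1 then h1 x' z' else h2 x' z')"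
  have "ON {i1, i2} u" using hp_on[OF assms(2)] assms(1) unfolding ON_def u_def by auto
  moreover have "ON {i1, i2} u'" using hp_on[OF assms(3)] assms(1) unfolding ON_def u'_def by auto
  ultimately obtain V where V: "V \<in> GU q" "\<forall>i\<in>{i1,i2}. u i v* V = u' i" using move by blast
  have v1: "h1 x z v* V = h1 x' z'" using V(2) unfolding u_def u'_def by auto
  have v2: "h2 x z v* V = h2 x' z'" using V(2) assms(1) unfolding u_def u'_def by auto
  have "x v* V = x'"
    by (rule comb1[OF hp_on(5)[OF assms(2)] hp_on(5)[OF assms(3)] v1 v2])
  moreover have "z v* V = z'"
    by (rule comb2[OF hp_on(6)[OF assms(2)] hp_on(6)[OF assms(3)] v1 v2])
  ultimately show ?thesis using V(1) by blast
qed

definition X4 :: "'a^'n \<Rightarrow> 'a^'n \<Rightarrow> 'a^'n \<Rightarrow> 'a^'n \<Rightarrow> bool" where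
  "X4 x z y w \<longleftrightarrow> HP x z \<and> HP y w \<and> H x y = 0 \<and> H x w = 0 \<and> H z y = 0 \<and> H z w = 0"

lemma X4_on:
  assumes "X4 x z y w"
  shows "H (h1 x z) (h1 y w) = 0" "H (h1 x z) (h2 y w) = 0" "H (h2 x z) (h1 y w) = 0" "H (h2 x z) (h2 y w) = 0"
    "H (h1 y w) (h1 x z) = 0" "H (h2 y w) (h1 x z) = 0" "H (h1 y w) (h2 x z) = 0" "H (h2 y w) (h2 x z) = 0"
proof -
  have a: "H x y = 0" "H x w = 0" "H z y = 0" "H z w = 0" using assms unfolding X4_def by auto
  note r1 = h_orth_r[OF a(1,2)] and r2 = h_orth_r[OF a(3,4)]
  show 1: "H (h1 x z) (h1 y w) = 0" "H (h1 x z) (h2 y w) = 0" "H (h2 x z) (h1 y w) = 0" "H (h2 x z) (h2 y w) = 0"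
    using h_orth_l[OF r1(1) r2(1)] h_orth_l[OF r1(2) r2(2)] by auto
  show "H (h1 y w) (h1 x z) = 0" "H (h2 y w) (h1 x z) = 0" "H (h1 y w) (h2 x z) = 0" "H (h2 y w) (h2 x z) = 0"
    using 1 herm_sym by (metis cj_0)+
qed

lemma hp4_move:
  fixes i1 i2 i3 i4 :: "'n::finite" and x z y w x' z' y' w' :: "'a^'n"
  assumes d: "distinct [i1, i2, i3, i4]" and X: "X4 x z y w" "X4 x' z' y' w'"
  shows "\<exists>V\<in>GU q. x v* V = x' \<and> z v* V = z' \<and> y v* V = y' \<and> w v* V = w'"
proof -
  have hp: "HP x z" "HP y w" "HP x' z'" "HP y' w'" using X unfolding X4_def by auto
  define u where "u = (\<lambda>i. if i = i1 then h1 x z else if i = i2 then h2 x z else if i = i3 then h1 y w else h2 y w)"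
  define u' where "u' = (\<lambda>i. if i = i1 then h1 x' z' else if i = i2 then h2 x' z' else if i = i3 then h1 y' w' else h2 y' w')"
  have "ON {i1, i2, i3, i4} u" using hp_on[OF hp(1)] hp_on[OF hp(2)] X4_on[OF X(1)] d unfolding ON_def u_def by auto
  moreover have "ON {i1, i2, i3, i4} u'" using hp_on[OF hp(3)] hp_on[OF hp(4)] X4_on[OF X(2)] d unfolding ON_def u'_def by auto
  ultimately obtain V where V: "V \<in> GU q" "\<forall>i\<in>{i1,i2,i3,i4}. u i v* V = u' i" using move by blast
  have v1: "h1 x z v* V = h1 x' z'" using V(2) unfolding u_def u'_def by auto
  have v2: "h2 x z v* V = h2 x' z'" using V(2) d unfolding u_def u'_def by auto
  have v3: "h1 y w v* V = h1 y' w'" using V(2) d unfolding u_def u'_def by auto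
  have v4: "h2 y w v* V = h2 y' w'" using V(2) d unfolding u_def u'_def by auto
  have "x v* V = x'"
    by (rule comb1[OF hp_on(5)[OF hp(1)] hp_on(5)[OF hp(3)] v1 v2])
  moreover have "z v* V = z'"
    by (rule comb2[OF hp_on(6)[OF hp(1)] hp_on(6)[OF hp(3)] v1 v2])
  moreover have "y v* V = y'"
    by (rule comb1[OF hp_on(5)[OF hp(2)] hp_on(5)[OF hp(4)] v3 v4])
  moreover have "w v* V = w'"
    by (rule comb2[OF hp_on(6)[OF hp(2)] hp_on(6)[OF hp(4)] v3 v4])
  ultimately show ?thesis using V(1) by blast
qed

end

context GUc begin

definition orb :: "'a^'n \<Rightarrow> 'a^'n \<Rightarrow> (('a^'n) \<times> ('a^'n)) set" where
  "orb x y = {(x v* U, y v* U) | U. U \<in> GU q}"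

lemma Phi_iff: "(x::'a^'n) \<in> Phi q \<longleftrightarrow> x \<noteq> 0 \<and> H x x = 0" by (simp add: Phi_def)

lemma vm_cancel: assumes "(U::'a^'n^'n) \<in> GU q" "x v* U = y v* U" shows "x = y"
proof -
  obtain W where W: "U ** W = mat 1" using GU_inv[OF assms(1)] by blast
  have "x = (x v* U) v* W" by (simp add: vector_matrix_mul_assoc W)
  also have "\<dots> = (y v* U) v* W" using assms(2) by simp
  also have "\<dots> = y" by (simp add: vector_matrix_mul_assoc W)
  finally show ?thesis .
qed

lemma zero_vm: "(0::'a^'n) v* U = 0" by (simp add: vec_eq_iff vector_matrix_mult_def)

lemma phi_inv: assumes "(U::'a^'n^'n) \<in> GU q" "x \<in> Phi q" shows "x v* U \<in> Phi q"
proof -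
  have "x v* U \<noteq> 0"
  proof
    assume "x v* U = 0"
    hence "x v* U = 0 v* U" by (simp add: zero_vm)
    hence "x = 0" using vm_cancel[OF assms(1)] by blast
    thus False using assms(2) by (simp add: Phi_iff)
  qed
  thus ?thesis using assms herm_vm[OF assms(1)] by (simp add: Phi_iff)
qed

lemma scale_phi: assumes "a \<noteq> 0" "(x::'a^'n) \<in> Phi q" shows "a *s x \<in> Phi q"
  using assms by (auto simp: Phi_iff herm_scale_l herm_scale_r vec_eq_iff)

lemma orbS: assumes "(x::'a^'n) \<in> Phi q" "a \<noteq> 0" "i1 \<noteq> (i2::'n)"
  shows "orb x (a *s x) = S_rel q a"
proof
  show "orb x (a *s x) \<subseteq> S_rel q a"
    using phi_inv[OF _ assms(1)] scale_phi[OF assms(2) phi_inv[OF _ assms(1)]]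
    by (auto simp: orb_def S_rel_def vm_scale)
  show "S_rel q a \<subseteq> orb x (a *s x)"
  proof
    fix p :: "('a^'n) \<times> ('a^'n)" assume "p \<in> S_rel q a"
    then obtain x' :: "'a^'n" where x': "x' \<in> Phi q" "p = (x', a *s x')" by (auto simp: S_rel_def)
    obtain z where z: "HP x z" using partner_phi[OF assms(1)] by blast
    obtain z' where z': "HP x' z'" using partner_phi[OF x'(1)] by blast
    obtain V where V: "V \<in> GU q" "x v* V = x'" using hp_move[OF assms(3) z z'] by blast
    show "p \<in> orb x (a *s x)" unfolding orb_def using V x'(2) by (auto simp: vm_scale)
  qed
qed

lemma rep_R: assumes "(x::'a^'n) \<in> Phi q" "y \<in> Phi q" "H x y = a" "a \<noteq> 0"
  shows "HP x (cj (inverse a) *s y)" "y = cj a *s (cj (inverse a) *s y)"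
proof -
  show "HP x (cj (inverse a) *s y)" using assms
    by (auto simp: HP_def Phi_iff herm_scale_l herm_scale_r)
  have "cj a * cj (inverse a) = 1" using assms(4) by (simp flip: cj_mult)
  thus "y = cj a *s (cj (inverse a) *s y)" by (simp add: vec_eq_iff mult.assoc[symmetric])
qed

lemma scal_move: "y = c *s z \<Longrightarrow> y' = c *s z' \<Longrightarrow> z v* V = z' \<Longrightarrow> y v* V = (y'::'a^'n)"
  by (simp add: vm_scale)

lemma orbR: assumes "(x::'a^'n) \<in> Phi q" "y \<in> Phi q" "H x y = a" "a \<noteq> 0" "i1 \<noteq> (i2::'n)"
  shows "orb x y = R_rel q a"
proof
  show "orb x y \<subseteq> R_rel q a"
    using phi_inv[OF _ assms(1)] phi_inv[OF _ assms(2)] herm_vm assms(3)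
    by (auto simp: orb_def R_rel_def)
  show "R_rel q a \<subseteq> orb x y"
  proof
    fix p :: "('a^'n) \<times> ('a^'n)" assume "p \<in> R_rel q a"
    then obtain x' y' :: "'a^'n" where xy': "x' \<in> Phi q" "y' \<in> Phi q" "H x' y' = a" "p = (x', y')"
      by (auto simp: R_rel_def)
    note r = rep_R[OF assms(1-4)] and r' = rep_R[OF xy'(1-3) assms(4)]
    obtain V where V: "V \<in> GU q" "x v* V = x'" "(cj (inverse a) *s y) v* V = cj (inverse a) *s y'"
      using hp_move[OF assms(5) r(1) r'(1)] by blast
    have "y v* V = y'" by (rule scal_move[OF r(2) r'(2) V(3)])
    thus "p \<in> orb x y" unfolding orb_def using V xy'(4) by auto
  qed
qed

lemma kernel_lemma:
  assumes "(y::'a^'n) \<noteq> 0" "\<And>v. H v y = 0 \<Longrightarrow> H v x = 0"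
  shows "\<exists>c. x = c *s y"
proof -
  obtain v0 where v0: "H v0 y = 1" using unit_partner_l[OF assms(1)] by blast
  define d where "d = H v0 x"
  have e: "H v x = H v y * d" for v
  proof -
    have "H (v - H v y *s v0) y = 0" using v0 by (simp add: herm_diff_l herm_scale_l)
    hence "H (v - H v y *s v0) x = 0" by (rule assms(2))
    thus ?thesis unfolding d_def by (simp add: herm_diff_l herm_scale_l)
  qed
  have "H v (x - cj d *s y) = 0" for v using e[of v] by (simp add: herm_diff_r herm_scale_r)
  hence "x - cj d *s y = 0" by (rule nondeg_r)
  thus ?thesis by (metis eq_iff_diff_eq_0)
qed

lemma rep_T: assumes "((x::'a^'n), y) \<in> T_rel q" shows "\<exists>z w. X4 x z y w"
proof -
  have xy: "x \<in> Phi q" "y \<in> Phi q" "H x y = 0" "\<not> (\<exists>c. y = c *s x)" using assms by (auto simp: T_rel_def)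
  have x0: "x \<noteq> 0" "H x x = 0" and y0: "y \<noteq> 0" "H y y = 0" using xy by (auto simp: Phi_iff)
  have hyx: "H y x = 0" using herm_sym[of y x] xy(3) by simp
  obtain v1 where v1: "H v1 y = 0" "H v1 x \<noteq> 0"
  proof (rule ccontr)
    note ob = that
    assume nt: "\<not> thesis"
    have "\<And>v. H v y = 0 \<Longrightarrow> H v x = 0" using ob nt by blast
    then obtain c where c: "x = c *s y" using kernel_lemma[OF y0(1)] by blast
    have "c \<noteq> 0" using c x0(1) by auto
    hence "y = inverse c *s x" using c by (simp add: vec_eq_iff)
    thus False using xy(4) by blast
  qed
  define w1 where "w1 = inverse (H v1 x) *s v1"
  have w1: "H w1 x = 1" "H w1 y = 0" using v1 unfolding w1_def by (simp_all add: herm_scale_l)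
  have xw1: "H x w1 = 1" using herm_sym[of x w1] w1 by simp
  obtain s where s: "HP x (w1 + s *s x)" using partner[OF x0(2) xw1] by blast
  define z where "z = w1 + s *s x"
  have yz: "H y z = 0" using herm_sym[of y w1] w1 hyx unfolding z_def by (simp add: herm_simps)
  have zy: "H z y = 0" using herm_sym[of z y] yz by simp
  have hpxz: "HP x z" using s z_def by simp
  define u1 where "u1 = h1 x z"
  define u2 where "u2 = h2 x z"
  have uy: "H u1 y = 0" "H u2 y = 0" using h_orth_l[OF xy(3) zy] unfolding u1_def u2_def by auto
  note ho = hp_on[OF hpxz, folded u1_def u2_def]
  obtain v0 where v0: "H v0 y = 1" using unit_partner_l[OF y0(1)] by blast
  define v2 where "v2 = v0 - H v0 u1 *s u1 - H v0 u2 *s u2"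
  have v2u: "H v2 u1 = 0" "H v2 u2 = 0" using ho(1-4) unfolding v2_def by (simp_all add: herm_simps)
  have uv2: "H u1 v2 = 0" "H u2 v2 = 0" using v2u herm_sym[of u1 v2] herm_sym[of u2 v2] by simp_all
  have v2y: "H v2 y = 1" using v0 uy unfolding v2_def by (simp add: herm_simps)
  have yv2: "H y v2 = 1" using herm_sym[of y v2] v2y by simp
  obtain s' where s': "HP y (v2 + s' *s y)" using partner[OF y0(2) yv2] by blast
  define w where "w = v2 + s' *s y"
  have xv2: "H x v2 = 0"
  proof -
    have "H x v2 = H ((1 - t0) *s u1 + (t0 / l0) *s u2) v2"
      using arg_cong[where f="\<lambda>t. H t v2", OF ho(5)] by simp
    thus ?thesis using uv2 by (simp add: herm_simps)
  qed
  have zv2: "H z v2 = 0"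
  proof -
    have "H z v2 = H (u1 - (1 / l0) *s u2) v2"
      using arg_cong[where f="\<lambda>t. H t v2", OF ho(6)] by simp
    thus ?thesis using uv2 by (simp add: herm_simps)
  qed
  have "X4 x z y w" unfolding X4_def w_def
    using hpxz s' xy(3) zy xv2 zv2 by (simp add: herm_simps)
  thus ?thesis by blast
qed

lemma X4_card: assumes "X4 (x::'a^'n) z y w" shows "4 \<le> CARD('n)"
proof -
  have hp: "HP x z" "HP y w" using assms unfolding X4_def by auto
  define u1 where "u1 = h1 x z"
  define u2 where "u2 = h2 x z"
  define u3 where "u3 = h1 y w"
  define u4 where "u4 = h2 y w"
  note o1 = hp_on[OF hp(1), folded u1_def u2_def] and o2 = hp_on[OF hp(2), folded u3_def u4_def]
  note o3 = X4_on[OF assms, folded u1_def u2_def u3_def u4_def]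
  define f where "f = (\<lambda>(c1::'a, c2::'a, c3::'a, c4::'a). c1 *s u1 + c2 *s u2 + c3 *s u3 + c4 *s u4)"
  have fc: "H (f (c1,c2,c3,c4)) u1 = c1" "H (f (c1,c2,c3,c4)) u2 = c2"
       "H (f (c1,c2,c3,c4)) u3 = c3" "H (f (c1,c2,c3,c4)) u4 = c4" for c1 c2 c3 c4
    unfolding f_def using o1 o2 o3 by (simp_all add: herm_simps)
  have "inj f"
  proof (rule injI)
    fix a b assume e: "f a = f b"
    obtain a1 a2 a3 a4 where a: "a = (a1,a2,a3,a4)" by (cases a) auto
    obtain b1 b2 b3 b4 where b: "b = (b1,b2,b3,b4)" by (cases b) auto
    show "a = b" using fc[of a1 a2 a3 a4] fc[of b1 b2 b3 b4] e unfolding a b by metis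
  qed
  hence "card (UNIV :: ('a \<times> 'a \<times> 'a \<times> 'a) set) \<le> card (UNIV :: ('a^'n) set)"
    by (intro card_inj_on_le[of f]) auto
  also have "card (UNIV :: ('a^'n) set) \<le> card (UNIV :: ('n \<Rightarrow> 'a) set)"
    by (intro card_inj_on_le[of vec_nth]) (auto simp: inj_on_def vec_eq_iff)
  also have "\<dots> = CARD('a) ^ CARD('n)" by (simp add: card_fun)
  finally have "CARD('a) ^ 4 \<le> CARD('a) ^ CARD('n)"
    by (simp add: power4_eq_xxxx)
  moreover have "1 < CARD('a)"
  proof -
    have "2^2 \<le> q^2" using q2 by (intro power_mono) auto
    thus ?thesis using cardA by simp
  qed
  ultimately show ?thesis using power_le_imp_le_exp by blast
qed

end

context GUc begin

lemma exists_notin: assumes "card (A::'n::finite set) < CARD('n)" shows "\<exists>i. i \<notin> A"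
proof (rule ccontr)
  assume "\<not> (\<exists>i. i \<notin> A)"
  hence "A = UNIV" by auto
  thus False using assms by simp
qed

lemma idx2: assumes "2 \<le> CARD('n::finite)" shows "\<exists>i1 i2::'n. i1 \<noteq> i2"
proof -
  fix i1 :: 'n
  obtain i2 where "i2 \<notin> {i1}" using exists_notin[of "{i1}"] assms by auto
  thus ?thesis by auto
qed

lemma idx4: assumes "4 \<le> CARD('n::finite)" shows "\<exists>i1 i2 i3 i4::'n. distinct [i1, i2, i3, i4]"
proof -
  fix i1 :: 'n
  obtain i2 where i2: "i2 \<notin> {i1}" using exists_notin[of "{i1}"] assms by auto
  have "card {i1, i2} \<le> 2" by (simp add: card_insert_if)
  then obtain i3 where i3: "i3 \<notin> {i1, i2}" using exists_notin[of "{i1,i2}"] assms by auto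
  have "card {i1, i2, i3} \<le> 3" by (simp add: card_insert_if)
  then obtain i4 where i4: "i4 \<notin> {i1, i2, i3}" using exists_notin[of "{i1,i2,i3}"] assms by auto
  show ?thesis using i2 i3 i4 by (intro exI[of _ i1] exI[of _ i2] exI[of _ i3] exI[of _ i4]) auto
qed

lemma orbT: assumes "((x::'a^'n), y) \<in> T_rel q" shows "orb x y = T_rel q"
proof
  obtain z w where X: "X4 x z y w" using rep_T[OF assms] by blast
  obtain i1 i2 i3 i4 :: 'n where d: "distinct [i1, i2, i3, i4]" using idx4 X4_card[OF X] by blast
  have xy: "x \<in> Phi q" "y \<in> Phi q" "H x y = 0" "\<not> (\<exists>c. y = c *s x)" using assms by (auto simp: T_rel_def)
  show "orb x y \<subseteq> T_rel q"
  proof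
    fix p :: "('a^'n) \<times> ('a^'n)" assume "p \<in> orb x y"
    then obtain U where U: "U \<in> GU q" "p = (x v* U, y v* U)" by (auto simp: orb_def)
    have "\<not> (\<exists>c. y v* U = c *s (x v* U))"
    proof
      assume "\<exists>c. y v* U = c *s (x v* U)"
      then obtain c where "y v* U = (c *s x) v* U" by (auto simp: vm_scale)
      hence "y = c *s x" by (rule vm_cancel[OF U(1)])
      thus False using xy(4) by blast
    qed
    thus "p \<in> T_rel q" using U phi_inv[OF U(1) xy(1)] phi_inv[OF U(1) xy(2)] herm_vm[OF U(1)] xy(3)
      by (auto simp: T_rel_def)
  qed
  show "T_rel q \<subseteq> orb x y"
  proof
    fix p :: "('a^'n) \<times> ('a^'n)" assume p: "p \<in> T_rel q"
    obtain x' y' where p': "p = (x', y')" by (cases p) auto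
    obtain z' w' where X': "X4 x' z' y' w'" using rep_T p p' by blast
    obtain V where "V \<in> GU q" "x v* V = x'" "y v* V = y'" using hp4_move[OF d X X'] by blast
    thus "p \<in> orb x y" using p' by (auto simp: orb_def)
  qed
qed

end

context GUc begin

definition std :: "'n::finite \<Rightarrow> 'n \<Rightarrow> 'a^'n" where "std i j = axis i 1 + l0 *s axis j 1"

lemma std_phi: assumes "i \<noteq> j" shows "std i j \<in> Phi q"
proof -
  have "H (std i j) (std i j) = 1 + l0 * cj l0" using assms unfolding std_def
    by (simp add: herm_simps axis_herm)
  hence "H (std i j) (std i j) = 0" using l0 by simp
  moreover have "std i j $ i = 1" using assms by (simp add: std_def axis_def)
  hence "std i j \<noteq> 0" by auto
  ultimately show ?thesis by (simp add: Phi_iff)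
qed

lemma std_T: assumes "distinct [i1, i2, i3, i4]" shows "(std i1 i2, std i3 i4) \<in> T_rel q"
proof -
  have "H (std i1 i2) (std i3 i4) = 0" using assms unfolding std_def
    by (simp add: herm_simps axis_herm)
  moreover have "\<not> (\<exists>c. std i3 i4 = c *s std i1 i2)"
  proof
    assume "\<exists>c. std i3 i4 = c *s std i1 i2"
    then obtain c where c: "std i3 i4 = c *s std i1 i2" by blast
    have "std i3 i4 $ i3 = (c *s std i1 i2) $ i3" using c by simp
    moreover have "i3 \<noteq> i1" "i3 \<noteq> i2" "i3 \<noteq> i4" using assms by auto
    ultimately show False by (simp add: std_def axis_def)
  qed
  ultimately show ?thesis using assms std_phi[of i1 i2] std_phi[of i3 i4] by (simp add: T_rel_def)
qed

end

context GUc begin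

lemma orbitals_eq:
  assumes "2 \<le> CARD('n::finite)"
  shows "(orbitals q :: (('a^'n) \<times> ('a^'n)) set set)
     = S_rel q ` (UNIV - {0}) \<union> R_rel q ` (UNIV - {0}) \<union> (if 4 \<le> CARD('n) then {T_rel q} else {})"
    (is "_ = ?R")
proof -
  obtain i1 i2 :: 'n where i12: "i1 \<noteq> i2" using idx2[OF assms] by blast
  have oe: "(orbitals q :: (('a^'n) \<times> ('a^'n)) set set) = {orb x y | x y. x \<in> Phi q \<and> y \<in> Phi q}"
    unfolding orbitals_def orb_def by (rule refl)
  have cls: "orb x y \<in> ?R" if xy: "x \<in> Phi q" "y \<in> Phi q" for x y :: "'a^'n"
  proof (cases "\<exists>c. y = c *s x")
    case True
    then obtain c where c: "y = c *s x" by blast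
    have c0: "c \<noteq> 0" using c xy(2) by (auto simp: Phi_iff)
    have "orb x y = S_rel q c" using orbS[OF xy(1) c0 i12] c by simp
    moreover have "S_rel q c \<in> S_rel q ` (UNIV - {0})" using c0 by simp
    ultimately show ?thesis by (intro UnI1) simp
  next
    case False
    show ?thesis
    proof (cases "H x y = 0")
      case True
      hence T: "(x, y) \<in> T_rel q" using False xy by (simp add: T_rel_def)
      obtain z w where "X4 x z y w" using rep_T[OF T] by blast
      hence c4: "4 \<le> CARD('n)" by (rule X4_card)
      have "orb x y = T_rel q" using orbT[OF T] .
      thus ?thesis using c4 by (intro UnI2) simp
    next
      case nz: False
      have "orb x y = R_rel q (H x y)" using orbR[OF xy refl nz i12] .
      moreover have "R_rel q (H x y) \<in> R_rel q ` (UNIV - {0})" using nz by simp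
      ultimately show ?thesis by (intro UnI1 UnI2) simp
    qed
  qed
  have sub: "(orbitals q :: (('a^'n) \<times> ('a^'n)) set set) \<subseteq> ?R"
  proof
    fix Ob assume "Ob \<in> (orbitals q :: (('a^'n) \<times> ('a^'n)) set set)"
    then obtain x y :: "'a^'n" where "Ob = orb x y" "x \<in> Phi q" "y \<in> Phi q" unfolding oe by blast
    thus "Ob \<in> ?R" using cls by simp
  qed
  define e where "e = std i1 i2"
  have e: "e \<in> Phi q" using std_phi[OF i12] e_def by simp
  obtain z where z: "HP e z" using partner_phi[OF e] by blast
  have zphi: "z \<in> Phi q" using z HP_nz[OF z] by (simp add: HP_def Phi_iff)
  have S: "S_rel q a \<in> (orbitals q :: (('a^'n) \<times> ('a^'n)) set set)" if a: "a \<noteq> 0" for a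
  proof -
    have "S_rel q a = orb e (a *s e)" using orbS[OF e a i12] by simp
    moreover have "orb e (a *s e) \<in> {orb x y | x y. x \<in> Phi q \<and> y \<in> Phi q}"
      using e scale_phi[OF a e] by blast
    ultimately show ?thesis unfolding oe by simp
  qed
  have R: "R_rel q a \<in> (orbitals q :: (('a^'n) \<times> ('a^'n)) set set)" if a: "a \<noteq> 0" for a
  proof -
    have y: "cj a *s z \<in> Phi q" using scale_phi[OF _ zphi] a by simp
    have "H e (cj a *s z) = a" using z by (simp add: herm_scale_r HP_def)
    hence "R_rel q a = orb e (cj a *s z)" using orbR[OF e y _ a i12] by simp
    moreover have "orb e (cj a *s z) \<in> {orb x y | x y. x \<in> Phi q \<and> y \<in> Phi q}"
      using e y by blast
    ultimately show ?thesis unfolding oe by simp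
  qed
  have T: "T_rel q \<in> (orbitals q :: (('a^'n) \<times> ('a^'n)) set set)" if c4: "4 \<le> CARD('n)"
  proof -
    obtain j1 j2 j3 j4 :: 'n where d: "distinct [j1, j2, j3, j4]" using idx4[OF c4] by blast
    have T: "(std j1 j2, std j3 j4) \<in> T_rel q" by (rule std_T[OF d])
    hence "T_rel q = orb (std j1 j2) (std j3 j4)" using orbT[OF T] by simp
    moreover have "orb (std j1 j2) (std j3 j4) \<in> {orb x y | x y. x \<in> Phi q \<and> y \<in> Phi q}"
      using T unfolding T_rel_def by blast
    ultimately show ?thesis unfolding oe by simp
  qed
  have s1: "S_rel q ` (UNIV - {0}) \<subseteq> (orbitals q :: (('a^'n) \<times> ('a^'n)) set set)" using S by blast
  have s2: "R_rel q ` (UNIV - {0}) \<subseteq> (orbitals q :: (('a^'n) \<times> ('a^'n)) set set)" using R by blast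
  have s3: "(if 4 \<le> CARD('n) then {T_rel q} else {}) \<subseteq> (orbitals q :: (('a^'n) \<times> ('a^'n)) set set)"
    using T by simp
  have "?R \<subseteq> orbitals q" using s1 s2 s3 by (intro Un_least)
  with sub show ?thesis by (rule antisym)
qed

end

context GUc begin

lemma count:
  assumes "2 \<le> CARD('n::finite)"
  shows "card (S_rel q ` (UNIV - {0}) \<union> R_rel q ` (UNIV - {0}) :: (('a^'n) \<times> ('a^'n)) set set) = 2 * (q^2 - 1)"
    and "4 \<le> CARD('n) \<Longrightarrow> T_rel q \<notin> (S_rel q ` (UNIV - {0}) \<union> R_rel q ` (UNIV - {0}) :: (('a^'n) \<times> ('a^'n)) set set)"
proof -
  obtain i1 i2 :: 'n where i12: "i1 \<noteq> i2" using idx2[OF assms] by blast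
  define e where "e = std i1 i2"
  have e: "e \<in> Phi q" using std_phi[OF i12] e_def by simp
  obtain z where z: "HP e z" using partner_phi[OF e] by blast
  have zphi: "z \<in> Phi q" using z HP_nz[OF z] by (simp add: HP_def Phi_iff)
  obtain k where k: "e$k \<noteq> 0" using nz_coord e by (auto simp: Phi_iff)
  have inS: "(e, a *s e) \<in> S_rel q a" if "a \<noteq> 0" for a
    using e scale_phi[OF that e] by (simp add: S_rel_def)
  have inR: "(e, cj a *s z) \<in> R_rel q a" if a: "a \<noteq> 0" for a
  proof -
    have y: "cj a *s z \<in> Phi q" using scale_phi[OF _ zphi] a by simp
    have "H e (cj a *s z) = a" using z by (simp add: herm_scale_r HP_def)
    thus ?thesis using e y by (simp add: R_rel_def)
  qed
  have injS: "inj_on (S_rel q :: 'a \<Rightarrow> (('a^'n) \<times> ('a^'n)) set) (UNIV - {0})"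
  proof (rule inj_onI)
    fix a b :: 'a assume ab: "a \<in> UNIV - {0}" "b \<in> UNIV - {0}" "S_rel q a = (S_rel q b :: (('a^'n) \<times> ('a^'n)) set)"
    have "(e, a *s e) \<in> S_rel q b" using inS ab by auto
    hence "a *s e = b *s e" by (simp add: S_rel_def)
    hence "a * e$k = b * e$k" by (metis vector_scalar_mult_def vec_lambda_beta)
    thus "a = b" using k by simp
  qed
  have injR: "inj_on (R_rel q :: 'a \<Rightarrow> (('a^'n) \<times> ('a^'n)) set) (UNIV - {0})"
  proof (rule inj_onI)
    fix a b :: 'a assume ab: "a \<in> UNIV - {0}" "b \<in> UNIV - {0}" "R_rel q a = (R_rel q b :: (('a^'n) \<times> ('a^'n)) set)"
    have "(e, cj a *s z) \<in> R_rel q b" using inR ab by auto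
    moreover have "(e, cj a *s z) \<in> R_rel q a" using inR ab by auto
    ultimately show "a = b" by (simp add: R_rel_def)
  qed
  have disj: "S_rel q ` (UNIV - {0}) \<inter> (R_rel q ` (UNIV - {0}) :: (('a^'n) \<times> ('a^'n)) set set) = {}"
  proof (rule ccontr)
    assume "S_rel q ` (UNIV - {0}) \<inter> (R_rel q ` (UNIV - {0}) :: (('a^'n) \<times> ('a^'n)) set set) \<noteq> {}"
    then obtain a b :: 'a where ab: "a \<noteq> 0" "b \<noteq> 0" "S_rel q a = (R_rel q b :: (('a^'n) \<times> ('a^'n)) set)" by auto
    have "(e, a *s e) \<in> R_rel q b" using inS[OF ab(1)] ab(3) by simp
    hence "H e (a *s e) = b" by (simp add: R_rel_def)
    moreover have "H e (a *s e) = 0" using e by (simp add: herm_scale_r Phi_iff)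
    ultimately show False using ab(2) by simp
  qed
  have cA: "card (UNIV - {0::'a}) = q^2 - 1" by (rule cardnz)
  show "card (S_rel q ` (UNIV - {0}) \<union> R_rel q ` (UNIV - {0}) :: (('a^'n) \<times> ('a^'n)) set set) = 2 * (q^2 - 1)"
    using card_Un_disjoint[OF _ _ disj] card_image[OF injS] card_image[OF injR] cA by simp
  assume "4 \<le> CARD('n)"
  show "T_rel q \<notin> (S_rel q ` (UNIV - {0}) \<union> R_rel q ` (UNIV - {0}) :: (('a^'n) \<times> ('a^'n)) set set)"
  proof
    assume "T_rel q \<in> (S_rel q ` (UNIV - {0}) \<union> R_rel q ` (UNIV - {0}) :: (('a^'n) \<times> ('a^'n)) set set)"
    then consider a where "a \<noteq> 0" "T_rel q = (S_rel q a :: (('a^'n) \<times> ('a^'n)) set)"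
      | b where "b \<noteq> 0" "T_rel q = (R_rel q b :: (('a^'n) \<times> ('a^'n)) set)" by auto
    thus False
    proof cases
      case 1
      have "(e, a *s e) \<in> T_rel q" using inS[OF 1(1)] 1(2) by simp
      thus False by (auto simp: T_rel_def)
    next
      case 2
      have "(e, cj b *s z) \<in> T_rel q" using inR[OF 2(1)] 2(2) by simp
      moreover have "H e (cj b *s z) = b" using z by (simp add: herm_scale_r HP_def)
      ultimately show False using 2(1) by (simp add: T_rel_def)
    qed
  qed
qed

lemma comp_eq: "{S_rel q (\<alpha> ^ i) | i. i < q^2 - 1} = (S_rel q ` (UNIV - {0}) :: (('a^'n) \<times> ('a^'n)) set set)"
  "{R_rel q (\<alpha> ^ i) | i. i < q^2 - 1} = (R_rel q ` (UNIV - {0}) :: (('a^'n) \<times> ('a^'n)) set set)"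
proof -
  have "{S_rel q (\<alpha> ^ i) | i. i < q^2 - 1} = (S_rel q ` ((\<lambda>i. \<alpha>^i) ` {..<q^2-1}) :: (('a^'n) \<times> ('a^'n)) set set)" by auto
  thus "{S_rel q (\<alpha> ^ i) | i. i < q^2 - 1} = (S_rel q ` (UNIV - {0}) :: (('a^'n) \<times> ('a^'n)) set set)"
    by (simp only: alpha_image)
  have "{R_rel q (\<alpha> ^ i) | i. i < q^2 - 1} = (R_rel q ` ((\<lambda>i. \<alpha>^i) ` {..<q^2-1}) :: (('a^'n) \<times> ('a^'n)) set set)" by auto
  thus "{R_rel q (\<alpha> ^ i) | i. i < q^2 - 1} = (R_rel q ` (UNIV - {0}) :: (('a^'n) \<times> ('a^'n)) set set)"
    by (simp only: alpha_image)
qed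

end

theorem theorem2p12:
  fixes \<alpha> :: "'a::{field,finite}" and q n :: nat
  assumes "\<exists>p k. prime p \<and> k > 0 \<and> q = p ^ k"
    and "CARD('a) = q ^ 2"
    and "primitive_elt \<alpha>"
    and "CARD('n::finite) = n"
  shows "(n \<in> {2, 3} \<longrightarrow>
            (orbitals q :: (('a^'n) \<times> ('a^'n)) set set)
              = {S_rel q (\<alpha> ^ i) | i. i < q^2 - 1} \<union> {R_rel q (\<alpha> ^ i) | i. i < q^2 - 1}
          \<and> card (orbitals q :: (('a^'n) \<times> ('a^'n)) set set) = 2 * q^2 - 2)
       \<and> (n \<ge> 4 \<longrightarrow>
            (orbitals q :: (('a^'n) \<times> ('a^'n)) set set)
              = {S_rel q (\<alpha> ^ i) | i. i < q^2 - 1} \<union> {R_rel q (\<alpha> ^ i) | i. i < q^2 - 1} \<union> {T_rel q}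
          \<and> card (orbitals q :: (('a^'n) \<times> ('a^'n)) set set) = 2 * q^2 - 1)"
proof -
  have fs: "q \<ge> 2" "\<And>a b::'a. (a+b)^q = a^q+b^q" using frob_setup[OF assms(1,2)] by auto
  interpret G: GUc q \<alpha> using fs assms(2,3) by unfold_locales auto
  have q4: "q^2 \<ge> 1" using fs(1) by (simp add: Suc_le_eq)
  show ?thesis
  proof (intro conjI impI)
    assume n: "n \<in> {2, 3}"
    hence c2: "2 \<le> CARD('n)" "\<not> 4 \<le> CARD('n)" using assms(4) by auto
    have oe: "(orbitals q :: (('a^'n) \<times> ('a^'n)) set set)
        = S_rel q ` (UNIV - {0}) \<union> R_rel q ` (UNIV - {0})"
      using G.orbitals_eq[OF c2(1)] c2(2) by simp
    show "(orbitals q :: (('a^'n) \<times> ('a^'n)) set set)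
              = {S_rel q (\<alpha> ^ i) | i. i < q^2 - 1} \<union> {R_rel q (\<alpha> ^ i) | i. i < q^2 - 1}"
      unfolding oe G.comp_eq by (rule refl)
    show "card (orbitals q :: (('a^'n) \<times> ('a^'n)) set set) = 2 * q^2 - 2"
      using oe G.count(1)[OF c2(1)] by simp
  next
    assume n: "n \<ge> 4"
    hence c2: "2 \<le> CARD('n)" "4 \<le> CARD('n)" using assms(4) by auto
    have oe: "(orbitals q :: (('a^'n) \<times> ('a^'n)) set set)
        = S_rel q ` (UNIV - {0}) \<union> R_rel q ` (UNIV - {0}) \<union> {T_rel q}"
      using G.orbitals_eq[OF c2(1)] c2(2) by simp
    show "(orbitals q :: (('a^'n) \<times> ('a^'n)) set set)
              = {S_rel q (\<alpha> ^ i) | i. i < q^2 - 1} \<union> {R_rel q (\<alpha> ^ i) | i. i < q^2 - 1} \<union> {T_rel q}"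
      unfolding oe G.comp_eq by (rule refl)
    have "card (orbitals q :: (('a^'n) \<times> ('a^'n)) set set) = Suc (2 * (q^2 - 1))"
      using oe G.count(1)[OF c2(1)] G.count(2)[OF c2(1) c2(2)] by (simp add: card_insert_if)
    thus "card (orbitals q :: (('a^'n) \<times> ('a^'n)) set set) = 2 * q^2 - 1"
      using q4 by simp
  qed
qed


end
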